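(* Let $n\ge 1$, $\nu\in\mathbb{S}^{2n}$ and $d\in\mathbb{R}$, and let $\Pi^+_{\nu,d}=\{\xi\in\mathbb{R}^{2n+1}:\langle\xi,\nu\rangle>d\}$. Then for every $u\in C_0^\infty(\Pi^+_{\nu,d})$, \[ \int_{\Pi^+_{\nu,d}}|\nabla_{\mathbb{H}^n}u|^2\,d\xi\;\ge\;\frac14\int_{\Pi^+_{\nu,d}}\sum_{i=1}^n\frac{\langle X_i(\xi),\nu\rangle^2+\langle Y_i(\xi),\nu\rangle^2}{\operatorname{dist}(\xi,\partial\Pi^+_{\nu,d})^2}\,|u|^2\,d\xi . \]
   Context: The Heisenberg group $\mathbb{H}^n$ is $\mathbb{R}^{2n+1}$ with points written $\xi=(x,y,t)$, $x,y\in\mathbb{R}^n$, $t\in\mathbb{R}$, and Lebesgue measure $d\xi$. For $1\le i\le n$ the left-invariant vector fields are $X_i=\partial_{x_i}+2y_i\partial_t$ and $Y_i=\partial_{y_i}-2x_i\partial_t$; we identify $X_i(\xi)$, $Y_i(\xi)$ with their coefficient vectors in $\mathbb{R}^{2n+1}$ (e.g. $X_i(\xi)=e_{x_i}+2y_ie_t$), and $\langle\cdot,\cdot\rangle$ is the Euclidean inner product on $\mathbb{R}^{2n+1}$. The horizontal gradient is $\nabla_{\mathbb{H}^n}u=(X_1u,\dots,X_nu,Y_1u,\dots,Y_nu)$ and $|\nabla_{\mathbb{H}^n}u|^2=\sum_{i=1}^n(|X_iu|^2+|Y_iu|^2)$. $\mathbb{S}^{2n}$ is the Euclidean unit sphere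 in $\mathbb{R}^{2n+1}$, and $\operatorname{dist}$ denotes Euclidean distance (so $\operatorname{dist}(\xi,\partial\Pi^+_{\nu,d})=\langle\xi,\nu\rangle-d$). Functions $u$ are real-valued. *)

theory Defs
  imports "HOL-Analysis.Analysis"
begin

text \<open>Points of the Heisenberg group H^n = R^(2n+1), written (x,y,t) with x,y in R^n
  (n = CARD('n)) and t real. The inner product on the product type is the Euclidean one.\<close>
type_synonym 'n heis = "(real^'n) \<times> (real^'n) \<times> real"

text \<open>Coefficient vectors of X_i = d/dx_i + 2 y_i d/dt and Y_i = d/dy_i - 2 x_i d/dt.\<close>
definition Xvf :: "'n::finite \<Rightarrow> 'n heis \<Rightarrow> 'n heis" where
  "Xvf i \<xi> = (axis i 1, 0, 2 * (fst (snd \<xi>) $ i))"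

definition Yvf :: "'n::finite \<Rightarrow> 'n heis \<Rightarrow> 'n heis" where
  "Yvf i \<xi> = (0, axis i 1, - 2 * (fst \<xi> $ i))"

coinductive smooth_fun :: "('a::euclidean_space \<Rightarrow> real) \<Rightarrow> bool" where
  "(\<forall>x. f differentiable (at x)) \<Longrightarrow>
   (\<forall>v. smooth_fun (\<lambda>x. frechet_derivative f (at x) v)) \<Longrightarrow> smooth_fun f"

definition Cinf0 :: "'a::euclidean_space set \<Rightarrow> ('a \<Rightarrow> real) set" where
  "Cinf0 \<Omega> = {u. smooth_fun u \<and> compact (closure {x. u x \<noteq> 0}) \<and> closure {x. u x \<noteq> 0} \<subseteq> \<Omega>}"

definition Xder :: "'n::finite \<Rightarrow> ('n heis \<Rightarrow> real) \<Rightarrow> 'n heis \<Rightarrow> real" where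
  "Xder i u \<xi> = frechet_derivative u (at \<xi>) (Xvf i \<xi>)"

definition Yder :: "'n::finite \<Rightarrow> ('n heis \<Rightarrow> real) \<Rightarrow> 'n heis \<Rightarrow> real" where
  "Yder i u \<xi> = frechet_derivative u (at \<xi>) (Yvf i \<xi>)"

definition hgrad_sq :: "('n::finite heis \<Rightarrow> real) \<Rightarrow> 'n heis \<Rightarrow> real" where
  "hgrad_sq u \<xi> = (\<Sum>i\<in>UNIV. (Xder i u \<xi>)\<^sup>2 + (Yder i u \<xi>)\<^sup>2)"

definition halfspace :: "'n::finite heis \<Rightarrow> real \<Rightarrow> 'n heis set" where
  "halfspace \<nu> d = {\<xi>. \<xi> \<bullet> \<nu> > d}"

end

theory Submission
  imports Defs
begin


lemma paste_cont:
  fixes f g :: "'a::topological_space \<Rightarrow> real"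
  assumes "open S" "closed K" "K \<subseteq> S" "continuous_on S f"
    "\<And>x. x \<notin> K \<Longrightarrow> g x = 0" "\<And>x. x \<in> S \<Longrightarrow> g x = f x"
  shows "continuous_on UNIV g"
proof -
  have 1: "continuous_on S g" using assms(4,6) continuous_on_cong by fastforce
  have 2: "continuous_on (-K) g" using assms(5) continuous_on_cong[of "-K" "-K" g "\<lambda>_. 0"]
    by (simp add: continuous_on_const)
  have "continuous_on (S \<union> -K) g"
    using continuous_on_open_Un[OF assms(1) _ 1 2] assms(2) by auto
  moreover have "S \<union> -K = UNIV" using assms(3) by auto
  ultimately show ?thesis by simp
qed

lemma compact_supp_int:
  fixes g :: "'a::euclidean_space \<Rightarrow> real"
  assumes "continuous_on UNIV g" "compact K" "\<And>x. x \<notin> K \<Longrightarrow> g x = 0" "K \<subseteq> cbox p q"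
  shows "(g has_integral integral UNIV g) (cbox p q)" "g integrable_on UNIV"
    "integral (cbox p q) g = integral UNIV g"
proof -
  have i: "(g has_integral integral (cbox p q) g) (cbox p q)"
    using integrable_continuous[OF continuous_on_subset[OF assms(1)]] by blast
  have u: "(g has_integral integral (cbox p q) g) UNIV"
    by (rule has_integral_on_superset[OF i]) (use assms in auto)
  then show "g integrable_on UNIV" by blast
  show e: "integral (cbox p q) g = integral UNIV g" using u by (simp add: integral_unique)
  show "(g has_integral integral UNIV g) (cbox p q)" using i e by simp
qed

lemma smooth_cont: "smooth_fun f \<Longrightarrow> continuous_on UNIV f"
  by (erule smooth_fun.cases) (auto intro!: continuous_at_imp_continuous_on differentiable_imp_continuous_within)

lemma smooth_diff: "smooth_fun f \<Longrightarrow> f differentiable (at x)"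
  by (erule smooth_fun.cases) auto

lemma smooth_deriv: "smooth_fun f \<Longrightarrow> smooth_fun (\<lambda>x. frechet_derivative f (at x) v)"
  by (erule smooth_fun.cases) auto

lemma c1: fixes h :: "'a::euclidean_space \<Rightarrow> real" assumes ch: "continuous_on UNIV h"
  shows "continuous_on UNIV (\<lambda>x. h (x + s *\<^sub>R e))"
  by (rule continuous_on_compose2[OF ch continuous_on_add[OF continuous_on_id continuous_on_const]]) auto
lemma c2: fixes h :: "'a::euclidean_space \<Rightarrow> real" assumes ch: "continuous_on UNIV h"
  shows "continuous_on (A \<times> B) (\<lambda>(s::real, x). h (x + s *\<^sub>R e))"
proof -
  have "continuous_on (A \<times> B) (\<lambda>p. h (snd p + fst p *\<^sub>R e))"
    by (rule continuous_on_compose2[OF ch continuous_on_add[OF continuous_on_snd continuous_on_scaleR[OF continuous_on_fst continuous_on_const]]])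
     (auto intro: continuous_on_id)
  then show ?thesis by (simp add: split_beta)
qed

lemma core:
  fixes H h :: "'a::euclidean_space \<Rightarrow> real"
  assumes K: "compact K" and cH: "continuous_on UNIV H" and ch: "continuous_on UNIV h"
    and H0: "\<And>x. x \<notin> K \<Longrightarrow> H x = 0" and h0: "\<And>x. x \<notin> K \<Longrightarrow> h x = 0"
    and D: "\<And>x. ((\<lambda>s. H (x + s *\<^sub>R e)) has_real_derivative h x) (at 0)"
  shows "integral UNIV h = 0"
proof -
  obtain R where R: "\<forall>x\<in>K. norm x \<le> R"
    using bounded_pos[THEN iffD1, OF compact_imp_bounded[OF K]] by blast
  obtain c :: 'a where c: "cball (0::'a) (R + norm e) \<subseteq> cbox (-c) c"
    using bounded_subset_cbox_symmetric[of "cball (0::'a) (R + norm e)"] by auto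
  define B where "B = cbox (-c) c"
  define J where "J = integral UNIV H"
  define \<Phi> where "\<Phi> s = integral B (\<lambda>x. H (x + s *\<^sub>R e))" for s
  have KB: "K \<subseteq> B"
  proof
    fix x assume "x \<in> K"
    then have "norm x \<le> R" using R by blast
    then have "norm x \<le> R + norm e" using norm_ge_zero[of e] by linarith
    then have "x \<in> cball 0 (R + norm e)" by simp
    then show "x \<in> B" using c unfolding B_def by blast
  qed
  have const: "\<Phi> s = J" if s: "s \<in> ball 0 1" for s
  proof -
    have "K \<subseteq> cbox (- c + s *\<^sub>R e) (c + s *\<^sub>R e)"
    proof
      fix x assume x: "x \<in> K"
      have "norm (x - s *\<^sub>R e) \<le> norm x + norm (s *\<^sub>R e)" by (rule norm_triangle_ineq4)
      also have "norm (s *\<^sub>R e) \<le> norm e" using s by (simp add: mult_left_le_one_le)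
      finally have "norm (x - s *\<^sub>R e) \<le> norm x + norm e" by simp
      moreover have "norm x \<le> R" using R x by blast
      ultimately have "x - s *\<^sub>R e \<in> cball 0 (R + norm e)" by simp
      then have "x - s *\<^sub>R e \<in> cbox (-c) c" using c by blast
      then have "s *\<^sub>R e + (x - s *\<^sub>R e) \<in> cbox (s *\<^sub>R e + - c) (s *\<^sub>R e + c)"
        unfolding cbox_translation by blast
      then show "x \<in> cbox (- c + s *\<^sub>R e) (c + s *\<^sub>R e)" by (simp add: add.commute)
    qed
    then have "(H has_integral J) (cbox (-c + s *\<^sub>R e) (c + s *\<^sub>R e))"
      unfolding J_def using compact_supp_int(1)[OF cH K H0] by blast
    then have "((H \<circ> (+) (s *\<^sub>R e)) has_integral J) (cbox (-c) c)"
      using has_integral_shift_cbox_iff by blast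
    then show ?thesis unfolding \<Phi>_def B_def
      by (simp add: integral_unique o_def add.commute)
  qed
  have cB: "compact B" unfolding B_def by simp
  have cont1: "continuous_on UNIV (\<lambda>x. h (x + s *\<^sub>R e))" for s
    by (rule c1[OF ch])
  have cont2: "continuous_on UNIV (\<lambda>x. H (x + s *\<^sub>R e))" for s
    by (rule c1[OF cH])
  have d0: "(\<Phi> has_field_derivative integral B (\<lambda>x. h (x + 0 *\<^sub>R e))) (at 0 within ball 0 1)"
    unfolding \<Phi>_def B_def
  proof (rule leibniz_rule_field_derivative)
    fix s :: real and x assume "s \<in> ball 0 1" "x \<in> cbox (-c) c"
    have "((\<lambda>r. H ((x + s *\<^sub>R e) + r *\<^sub>R e)) has_real_derivative h (x + s *\<^sub>R e)) (at 0)"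
      by (rule D)
    moreover have "(\<lambda>r. H ((x + s *\<^sub>R e) + r *\<^sub>R e)) = (\<lambda>r. H (x + (r + s) *\<^sub>R e))"
      by (simp add: scaleR_add_left add_ac)
    ultimately have "((\<lambda>r. H (x + (r + s) *\<^sub>R e)) has_real_derivative h (x + s *\<^sub>R e)) (at 0)"
      by simp
    then have "((\<lambda>r. H (x + r *\<^sub>R e)) has_real_derivative h (x + s *\<^sub>R e)) (at (0 + s))"
      by (subst DERIV_shift) simp
    then show "((\<lambda>s. H (x + s *\<^sub>R e)) has_real_derivative h (x + s *\<^sub>R e)) (at s within ball 0 1)"
      by (simp add: has_field_derivative_at_within)
  next
    fix s :: real assume "s \<in> ball 0 1"
    show "(\<lambda>x. H (x + s *\<^sub>R e)) integrable_on cbox (- c) c"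
      by (rule integrable_continuous[OF continuous_on_subset[OF cont2]]) auto
  next
    show "continuous_on (ball 0 1 \<times> cbox (- c) c) (\<lambda>(s, x). h (x + s *\<^sub>R e))"
      by (rule c2[OF ch])
  qed auto
  have e1: "at (0::real) within ball 0 1 = at 0" by (rule at_within_open) auto
  have e2: "(\<lambda>x. h (x + 0 *\<^sub>R e)) = h" by simp
  have d1: "(\<Phi> has_field_derivative integral B h) (at 0)"
    using d0 unfolding e1 e2 .
  have "((\<lambda>s. J) has_field_derivative integral B h) (at 0)"
    by (rule has_field_derivative_transform_within_open[OF d1, of "ball 0 1"]) (auto simp: const)
  then have "integral B h = 0" using DERIV_unique[OF _ DERIV_const] by blast
  moreover have "integral B h = integral UNIV h"
    unfolding B_def by (rule compact_supp_int(3)[OF ch K h0]) (use KB B_def in auto)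
  ultimately show ?thesis by simp
qed

definition Gf :: "('a::euclidean_space \<Rightarrow> real) \<Rightarrow> ('a \<Rightarrow> real) \<Rightarrow> ('a \<Rightarrow> real) \<Rightarrow> 'a \<Rightarrow> real \<Rightarrow> 'a \<Rightarrow> real" where
  "Gf u a m \<nu> d \<xi> = (if d < \<xi> \<bullet> \<nu> then m \<xi> * ((u \<xi>)\<^sup>2 * a \<xi> / (2 * (\<xi> \<bullet> \<nu> - d))) else 0)"

definition hf :: "('a::euclidean_space \<Rightarrow> real) \<Rightarrow> ('a \<Rightarrow> real) \<Rightarrow> ('a \<Rightarrow> real) \<Rightarrow> 'a \<Rightarrow> 'a \<Rightarrow> real \<Rightarrow> 'a \<Rightarrow> real" where
  "hf u a m e \<nu> d \<xi> = (if d < \<xi> \<bullet> \<nu> then m \<xi> * (u \<xi> * frechet_derivative u (at \<xi>) e * a \<xi> / (\<xi> \<bullet> \<nu> - d)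
      - (u \<xi>)\<^sup>2 * a \<xi> * (e \<bullet> \<nu>) / (2 * (\<xi> \<bullet> \<nu> - d)\<^sup>2)) else 0)"

lemma dir_deriv:
  assumes "u differentiable (at x)"
  shows "((\<lambda>s. u (x + s *\<^sub>R e)) has_real_derivative frechet_derivative u (at x) e) (at 0)"
proof -
  have fd: "(u has_derivative frechet_derivative u (at x)) (at x)"
    using assms frechet_derivative_works by blast
  have lin: "linear (frechet_derivative u (at x))" using has_derivative_linear[OF fd] .
  have l: "((\<lambda>s::real. x + s *\<^sub>R e) has_derivative (\<lambda>s. s *\<^sub>R e)) (at 0)"
    by (auto intro!: derivative_eq_intros)
  have "((u \<circ> (\<lambda>s::real. x + s *\<^sub>R e)) has_derivative (frechet_derivative u (at x) \<circ> (\<lambda>s. s *\<^sub>R e))) (at 0)"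
    unfolding o_def by (rule has_derivative_compose[OF l]) (simp add: fd)
  moreover have "(frechet_derivative u (at x) \<circ> (\<lambda>s. s *\<^sub>R e)) = (\<lambda>s. s * frechet_derivative u (at x) e)"
    using linear_cmul[OF lin] by (auto simp: o_def)
  ultimately have "((\<lambda>s. u (x + s *\<^sub>R e)) has_derivative (\<lambda>s. s * frechet_derivative u (at x) e)) (at 0)"
    by (simp add: o_def)
  moreover have "(\<lambda>s. s * frechet_derivative u (at x) e) = (*) (frechet_derivative u (at x) e)"
    by (auto simp: fun_eq_iff mult.commute)
  ultimately show ?thesis unfolding has_field_derivative_def by metis
qed

lemma dd: assumes "(U has_real_derivative P) (at 0)" "(c::real) \<noteq> 0"
 shows "((\<lambda>s. M * ((U s)\<^sup>2 * A / (2*(c + s*\<beta>)))) has_real_derivative M*(U 0 * P * A / c - (U 0)\<^sup>2*A*\<beta>/(2*c\<^sup>2))) (at 0)"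
  using assms
  by (auto intro!: derivative_eq_intros simp: field_simps power2_eq_square)

lemma alg1: "(\<delta>::real) \<noteq> 0 \<Longrightarrow> M * ((2*U*P*A*(2*\<delta>) - U\<^sup>2*A*(2*E)) / (2*\<delta>*(2*\<delta>)))
   = M * (U*P*A/\<delta> - U\<^sup>2*A*E/(2*\<delta>\<^sup>2))"
  by (simp add: field_simps power2_eq_square)

lemma lemmaA:
  fixes u a m :: "'a::euclidean_space \<Rightarrow> real"
  assumes ud: "\<And>x. u differentiable (at x)" and cu: "continuous_on UNIV u"
    and cdu: "continuous_on UNIV (\<lambda>x. frechet_derivative u (at x) e)"
    and K: "compact K" "K \<subseteq> {\<xi>. d < \<xi> \<bullet> \<nu>}" and u0: "\<And>x. x \<notin> K \<Longrightarrow> u x = 0"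
    and ca: "continuous_on UNIV a" and cm: "continuous_on UNIV m"
    and ai: "\<And>x s. a (x + s *\<^sub>R e) = a x" and mi: "\<And>x s. m (x + s *\<^sub>R e) = m x"
  shows "(hf u a m e \<nu> d has_integral 0) {\<xi>. d < \<xi> \<bullet> \<nu>}"
proof -
  have [continuous_intros]: "continuous_on S u" "continuous_on S a" "continuous_on S m"
    "continuous_on S (\<lambda>x. frechet_derivative u (at x) e)" for S
    using continuous_on_subset[OF cu] continuous_on_subset[OF ca] continuous_on_subset[OF cm]
      continuous_on_subset[OF cdu] by auto
  define S where "S = {\<xi>::'a. d < \<xi> \<bullet> \<nu>}"
  have oS: "open S" unfolding S_def by (rule open_Collect_less) (auto intro!: continuous_intros)
  have cK: "closed K" using K compact_imp_closed by blast
  have KS: "K \<subseteq> S" using K S_def by simp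
  have cG: "continuous_on UNIV (Gf u a m \<nu> d)"
  proof (rule paste_cont[OF oS cK KS])
    show "continuous_on S (\<lambda>\<xi>. m \<xi> * ((u \<xi>)\<^sup>2 * a \<xi> / (2 * (\<xi> \<bullet> \<nu> - d))))"
      by (intro continuous_intros) (auto simp: S_def)
  qed (auto simp: Gf_def S_def u0)
  have ch: "continuous_on UNIV (hf u a m e \<nu> d)"
  proof (rule paste_cont[OF oS cK KS])
    show "continuous_on S (\<lambda>\<xi>. m \<xi> * (u \<xi> * frechet_derivative u (at \<xi>) e * a \<xi> / (\<xi> \<bullet> \<nu> - d)
      - (u \<xi>)\<^sup>2 * a \<xi> * (e \<bullet> \<nu>) / (2 * (\<xi> \<bullet> \<nu> - d)\<^sup>2)))"
      by (intro continuous_intros) (auto simp: S_def)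
  qed (auto simp: hf_def S_def u0)
  have G0: "Gf u a m \<nu> d x = 0" if "x \<notin> K" for x using that by (auto simp: Gf_def u0)
  have h0: "hf u a m e \<nu> d x = 0" if "x \<notin> K" for x using that by (auto simp: hf_def u0)
  have D: "((\<lambda>s. Gf u a m \<nu> d (x + s *\<^sub>R e)) has_real_derivative hf u a m e \<nu> d x) (at 0)" for x
  proof (cases "x \<in> S")
    case True
    define T where "T = {s::real. d < x \<bullet> \<nu> + s * (e \<bullet> \<nu>)}"
    have oT: "open T" unfolding T_def
      by (rule open_Collect_less) (auto intro!: continuous_intros)
    have ne: "x \<bullet> \<nu> - d \<noteq> 0" using True by (simp add: S_def)
    have "((\<lambda>s. m x * ((u (x + s *\<^sub>R e))\<^sup>2 * a x / (2 * ((x \<bullet> \<nu> - d) + s * (e \<bullet> \<nu>)))))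
        has_real_derivative hf u a m e \<nu> d x) (at 0)"
      using dd[OF dir_deriv[OF ud, of x e] ne, of "m x" "a x" "e \<bullet> \<nu>"] True
      by (simp add: hf_def S_def)
    then show ?thesis
    proof (rule has_field_derivative_transform_within_open[OF _ oT])
      show "0 \<in> T" using True by (simp add: T_def S_def)
      fix s assume "s \<in> T"
      then show "m x * ((u (x + s *\<^sub>R e))\<^sup>2 * a x / (2 * ((x \<bullet> \<nu> - d) + s * (e \<bullet> \<nu>)))) =
          Gf u a m \<nu> d (x + s *\<^sub>R e)"
        by (simp add: T_def Gf_def ai mi inner_add_left algebra_simps)
    qed
  next
    case False
    then have xK: "x \<notin> K" using KS by auto
    define T where "T = {s::real. x + s *\<^sub>R e \<in> -K}"
    have oT: "open T" unfolding T_def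
      by (rule open_vimage[of "-K", unfolded vimage_def]) (use cK in \<open>auto intro!: continuous_intros\<close>)
    have "((\<lambda>s. 0) has_real_derivative hf u a m e \<nu> d x) (at 0)"
      using False by (simp add: hf_def S_def)
    then show ?thesis
    proof (rule has_field_derivative_transform_within_open[OF _ oT])
      show "0 \<in> T" using xK by (simp add: T_def)
      fix s assume "s \<in> T"
      then show "0 = Gf u a m \<nu> d (x + s *\<^sub>R e)" by (simp add: T_def G0)
    qed
  qed
  have int0: "integral UNIV (hf u a m e \<nu> d) = 0"
    by (rule core[OF K(1) cG ch G0 h0 D])
  obtain c where c: "K \<subseteq> cbox (-c) c"
    using bounded_subset_cbox_symmetric[OF compact_imp_bounded[OF K(1)]] by blast
  have "hf u a m e \<nu> d integrable_on UNIV" by (rule compact_supp_int(2)[OF ch K(1) h0 c])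
  then have "(hf u a m e \<nu> d has_integral 0) UNIV" using int0 integrable_integral by fastforce
  moreover have "(\<lambda>x. if x \<in> S then hf u a m e \<nu> d x else 0) = hf u a m e \<nu> d"
    by (auto simp: hf_def S_def)
  ultimately have "((\<lambda>x. if x \<in> S then hf u a m e \<nu> d x else 0) has_integral 0) UNIV" by simp
  then have "(hf u a m e \<nu> d has_integral 0) S" by (rule has_integral_restrict_UNIV[THEN iffD1])
  then show ?thesis unfolding S_def .
qed




definition exv :: "'n::finite \<Rightarrow> 'n heis" where "exv i = (axis i 1, 0, 0)"
definition eyv :: "'n::finite \<Rightarrow> 'n heis" where "eyv i = (0, axis i 1, 0)"
definition etv :: "'n::finite heis" where "etv = (0, 0, 1)"

lemma Xvf_dec: "Xvf i \<xi> = exv i + (2 * fst (snd \<xi>) $ i) *\<^sub>R etv"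
  by (simp add: Xvf_def exv_def etv_def)
lemma Yvf_dec: "Yvf i \<xi> = eyv i + (-2 * fst \<xi> $ i) *\<^sub>R etv"
  by (simp add: Yvf_def eyv_def etv_def)

lemma Xvf_inv1: "Xvf i (\<xi> + s *\<^sub>R exv j) = Xvf i \<xi>" by (simp add: Xvf_def exv_def)
lemma Xvf_inv2: "Xvf i (\<xi> + s *\<^sub>R etv) = Xvf i \<xi>" by (simp add: Xvf_def etv_def)
lemma Yvf_inv1: "Yvf i (\<xi> + s *\<^sub>R eyv j) = Yvf i \<xi>" by (simp add: Yvf_def eyv_def)
lemma Yvf_inv2: "Yvf i (\<xi> + s *\<^sub>R etv) = Yvf i \<xi>" by (simp add: Yvf_def etv_def)

lemma alg_e1: fixes \<delta> p q c U A \<alpha> \<beta> :: real assumes "\<delta> > 0" "A = \<alpha> + c * \<beta>"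
  shows "1 * (U * p * A / \<delta> - U\<^sup>2 * A * \<alpha> / (2 * \<delta>\<^sup>2)) + c * (U * q * A / \<delta> - U\<^sup>2 * A * \<beta> / (2 * \<delta>\<^sup>2))
      = U * A * (p + c * q) / \<delta> - U\<^sup>2 * A\<^sup>2 / (2 * \<delta>\<^sup>2)"
proof -
  have "U\<^sup>2 * A * \<alpha> / (2 * \<delta>\<^sup>2) + c * (U\<^sup>2 * A * \<beta> / (2 * \<delta>\<^sup>2)) = U\<^sup>2 * A * (\<alpha> + c * \<beta>) / (2 * \<delta>\<^sup>2)"
    by (simp add: add_divide_distrib algebra_simps)
  moreover have "U * p * A / \<delta> + c * (U * q * A / \<delta>) = U * A * (p + c * q) / \<delta>"
    by (simp add: add_divide_distrib algebra_simps)
  ultimately show ?thesis using assms(2) by (simp add: power2_eq_square algebra_simps)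
qed
lemma alg_e2: fixes \<delta> w U A :: real assumes "\<delta> > 0"
  shows "(w - U * A / (2 * \<delta>))\<^sup>2 = w\<^sup>2 - U * A * w / \<delta> + 1/4 * (A\<^sup>2 / \<delta>\<^sup>2 * U\<^sup>2)"
  using assms by (simp add: power2_eq_square field_simps)
lemma alg2:
  fixes \<delta> p q c U A \<alpha> \<beta> :: real
  assumes "\<delta> > 0" "A = \<alpha> + c * \<beta>"
  shows "(p + c * q)\<^sup>2 \<ge> 1/4 * (A\<^sup>2 / \<delta>\<^sup>2 * U\<^sup>2) +
     (1 * (U * p * A / \<delta> - U\<^sup>2 * A * \<alpha> / (2 * \<delta>\<^sup>2)) + c * (U * q * A / \<delta> - U\<^sup>2 * A * \<beta> / (2 * \<delta>\<^sup>2)))"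
proof -
  define w where "w = p + c * q"
  have e1: "1 * (U * p * A / \<delta> - U\<^sup>2 * A * \<alpha> / (2 * \<delta>\<^sup>2)) + c * (U * q * A / \<delta> - U\<^sup>2 * A * \<beta> / (2 * \<delta>\<^sup>2))
      = U * A * w / \<delta> - U\<^sup>2 * A\<^sup>2 / (2 * \<delta>\<^sup>2)"
    unfolding w_def by (rule alg_e1[OF assms])
  have e2: "(w - U * A / (2 * \<delta>))\<^sup>2 = w\<^sup>2 - U * A * w / \<delta> + 1/4 * (A\<^sup>2 / \<delta>\<^sup>2 * U\<^sup>2)"
    by (rule alg_e2[OF assms(1)])
  have "(w - U * A / (2 * \<delta>))\<^sup>2 \<ge> 0" by simp
  have e3: "U\<^sup>2 * A\<^sup>2 / (2 * \<delta>\<^sup>2) = 2 * (1/4 * (A\<^sup>2 / \<delta>\<^sup>2 * U\<^sup>2))"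
    by (simp add: field_simps)
  show ?thesis unfolding w_def[symmetric] e1 using e2 e3 \<open>(w - U * A / (2 * \<delta>))\<^sup>2 \<ge> 0\<close> by linarith
qed

lemma intHS:
  fixes f :: "'a::euclidean_space \<Rightarrow> real"
  assumes "open S" "compact K" "K \<subseteq> S" "continuous_on S f" "\<And>x. x \<in> S \<Longrightarrow> x \<notin> K \<Longrightarrow> f x = 0"
  shows "f integrable_on S"
proof -
  define g where "g x = (if x \<in> S then f x else 0)" for x
  have cg: "continuous_on UNIV g"
    by (rule paste_cont[OF assms(1) compact_imp_closed[OF assms(2)] assms(3,4)]) (use assms(5) in \<open>auto simp: g_def\<close>)
  obtain c where c: "K \<subseteq> cbox (-c) c"
    using bounded_subset_cbox_symmetric[OF compact_imp_bounded[OF assms(2)]] by blast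
  have "g integrable_on UNIV"
    by (rule compact_supp_int(2)[OF cg assms(2) _ c]) (use assms(5) in \<open>auto simp: g_def\<close>)
  then show ?thesis unfolding g_def by (simp add: integrable_restrict_UNIV)
qed

lemma infdist_hs:
  fixes \<nu> \<xi> :: "'a::euclidean_space"
  assumes "norm \<nu> = 1" "d < \<xi> \<bullet> \<nu>"
  shows "infdist \<xi> (frontier {x. x \<bullet> \<nu> > d}) = \<xi> \<bullet> \<nu> - d"
proof -
  have nz: "\<nu> \<noteq> 0" using assms(1) by auto
  have "{x. x \<bullet> \<nu> > d} = {x. \<nu> \<bullet> x > d}" by (simp add: inner_commute)
  then have fr: "frontier {x. x \<bullet> \<nu> > d} = {x. \<nu> \<bullet> x = d}"
    using frontier_halfspace_gt[of \<nu> d] nz by simp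
  have nn: "\<nu> \<bullet> \<nu> = 1" using assms(1) by (simp add: power2_norm_eq_inner[symmetric])
  define p where "p = \<xi> - (\<xi> \<bullet> \<nu> - d) *\<^sub>R \<nu>"
  have pin: "p \<in> {x. \<nu> \<bullet> x = d}" unfolding p_def using nn
    by (simp add: inner_diff_right inner_commute)
  have dp: "dist \<xi> p = \<xi> \<bullet> \<nu> - d" unfolding p_def dist_norm using assms by simp
  have le: "infdist \<xi> {x. \<nu> \<bullet> x = d} \<le> \<xi> \<bullet> \<nu> - d" using infdist_le[OF pin, of \<xi>] dp by simp
  have ge: "\<xi> \<bullet> \<nu> - d \<le> infdist \<xi> {x. \<nu> \<bullet> x = d}"
  proof -
    have "\<xi> \<bullet> \<nu> - d \<le> dist \<xi> y" if "y \<in> {x. \<nu> \<bullet> x = d}" for y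
    proof -
      have "\<xi> \<bullet> \<nu> - d = (\<xi> - y) \<bullet> \<nu>" using that by (simp add: inner_diff_left inner_diff_right inner_commute)
      also have "\<dots> \<le> norm (\<xi> - y) * norm \<nu>" by (rule norm_cauchy_schwarz)
      finally show ?thesis using assms(1) by (simp add: dist_norm)
    qed
    then show ?thesis unfolding infdist_notempty[OF _] using pin
      by (subst infdist_notempty) (auto intro!: cINF_greatest)
  qed
  show ?thesis unfolding fr using le ge by linarith
qed

lemma deriv_zero_out:
  fixes u :: "'a::euclidean_space \<Rightarrow> real"
  assumes "closed K" "\<And>x. x \<notin> K \<Longrightarrow> u x = 0" "x \<notin> K"
  shows "frechet_derivative u (at x) v = 0"
proof -
  have "((\<lambda>_. 0::real) has_derivative (\<lambda>_. 0)) (at x)" by simp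
  then have "(u has_derivative (\<lambda>_. 0)) (at x)"
    by (rule has_derivative_transform_within_open[of _ _ _ _ "-K"]) (use assms in auto)
  then have "(\<lambda>_. 0) = frechet_derivative u (at x)" by (rule frechet_derivative_at)
  then show ?thesis by (metis)
qed


theorem theorem2p1:
  fixes \<nu> :: "'n::finite heis" and d :: real and u :: "'n heis \<Rightarrow> real"
  assumes "norm \<nu> = 1"
    and "u \<in> Cinf0 (halfspace \<nu> d)"
  shows "integral (halfspace \<nu> d) (\<lambda>\<xi>. hgrad_sq u \<xi>)
       \<ge> 1/4 * integral (halfspace \<nu> d)
           (\<lambda>\<xi>. (\<Sum>i\<in>UNIV. (Xvf i \<xi> \<bullet> \<nu>)\<^sup>2 + (Yvf i \<xi> \<bullet> \<nu>)\<^sup>2)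
                 / (infdist \<xi> (frontier (halfspace \<nu> d)))\<^sup>2 * \<bar>u \<xi>\<bar>\<^sup>2)"
proof -
  define HS where "HS = halfspace \<nu> d"
  have HS_eq: "HS = {\<xi>. d < \<xi> \<bullet> \<nu>}" by (simp add: HS_def halfspace_def)
  have "{\<xi>. d < \<xi> \<bullet> \<nu>} = {\<xi>. \<nu> \<bullet> \<xi> > d}" by (simp add: inner_commute)
  then have oHS: "open HS" unfolding HS_eq using open_halfspace_gt by metis
  define K where "K = closure {x. u x \<noteq> 0}"
  have "smooth_fun u \<and> compact K \<and> K \<subseteq> HS"
    using assms(2) unfolding Cinf0_def K_def HS_def by simp
  then have su: "smooth_fun u" and cK: "compact K" and KHS: "K \<subseteq> HS" by auto
  have clK: "closed K" using cK compact_imp_closed by blast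
  have sub: "{x. u x \<noteq> 0} \<subseteq> K" unfolding K_def by (rule closure_subset)
  have u0: "u x = 0" if "x \<notin> K" for x using that sub by blast
  have ud: "\<And>x. u differentiable (at x)" using smooth_diff[OF su] .
  have cu: "continuous_on UNIV u" by (rule smooth_cont[OF su])
  have cdu: "continuous_on UNIV (\<lambda>x. frechet_derivative u (at x) v)" for v
    by (rule smooth_cont[OF smooth_deriv[OF su]])
  have [continuous_intros]: "continuous_on S u" "continuous_on S (\<lambda>x. frechet_derivative u (at x) v)" for S v
    using continuous_on_subset[OF cu subset_UNIV] continuous_on_subset[OF cdu subset_UNIV] by blast+
  have lin: "frechet_derivative u (at x) (p + c *\<^sub>R q) = frechet_derivative u (at x) p + c * frechet_derivative u (at x) q"
    for x p q c
  proof -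
    have "linear (frechet_derivative u (at x))"
      using has_derivative_linear ud frechet_derivative_works by blast
    then show ?thesis by (simp add: linear_add linear_cmul)
  qed
  have Xd: "Xder i u \<xi> = frechet_derivative u (at \<xi>) (exv i) + (2 * fst (snd \<xi>) $ i) * frechet_derivative u (at \<xi>) etv" for i \<xi>
    unfolding Xder_def Xvf_dec lin ..
  have Yd: "Yder i u \<xi> = frechet_derivative u (at \<xi>) (eyv i) + (-2 * fst \<xi> $ i) * frechet_derivative u (at \<xi>) etv" for i \<xi>
    unfolding Yder_def Yvf_dec lin ..
  have Xa: "Xvf i \<xi> \<bullet> \<nu> = exv i \<bullet> \<nu> + (2 * fst (snd \<xi>) $ i) * (etv \<bullet> \<nu>)" for i \<xi>
    unfolding Xvf_dec by (simp add: inner_add_left)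
  have Ya: "Yvf i \<xi> \<bullet> \<nu> = eyv i \<bullet> \<nu> + (-2 * fst \<xi> $ i) * (etv \<bullet> \<nu>)" for i \<xi>
    unfolding Yvf_dec by (simp add: inner_add_left inner_diff_left)
  define a where "a i \<xi> = Xvf i \<xi> \<bullet> \<nu>" for i \<xi>
  define b where "b i \<xi> = Yvf i \<xi> \<bullet> \<nu>" for i \<xi>
  define my where "my i \<xi> = 2 * fst (snd \<xi>) $ i" for i and \<xi> :: "'n heis"
  define mx where "mx i \<xi> = -2 * fst \<xi> $ i" for i and \<xi> :: "'n heis"
  have ca: "continuous_on UNIV (a i)" for i
    unfolding a_def Xvf_def by (intro continuous_intros)
  have cb: "continuous_on UNIV (b i)" for i
    unfolding b_def Yvf_def by (intro continuous_intros)
  have cmy: "continuous_on UNIV (my i)" for i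
    unfolding my_def by (intro continuous_intros)
  have cmx: "continuous_on UNIV (mx i)" for i
    unfolding mx_def by (intro continuous_intros)
  have c1: "continuous_on UNIV (\<lambda>_::'n heis. 1::real)" by simp
  have KS': "K \<subseteq> {\<xi>. d < \<xi> \<bullet> \<nu>}" using KHS HS_eq by simp
  define hs where "hs i \<xi> = hf u (a i) (\<lambda>_. 1) (exv i) \<nu> d \<xi> + hf u (a i) (my i) etv \<nu> d \<xi>
      + hf u (b i) (\<lambda>_. 1) (eyv i) \<nu> d \<xi> + hf u (b i) (mx i) etv \<nu> d \<xi>" for i \<xi>
  have ai1: "a i (x + s *\<^sub>R exv i) = a i x" for i x s by (simp add: a_def Xvf_inv1)
  have ai2: "a i (x + s *\<^sub>R etv) = a i x" for i x s by (simp add: a_def Xvf_inv2)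
  have bi1: "b i (x + s *\<^sub>R eyv i) = b i x" for i x s by (simp add: b_def Yvf_inv1)
  have bi2: "b i (x + s *\<^sub>R etv) = b i x" for i x s by (simp add: b_def Yvf_inv2)
  have my2: "my i (x + s *\<^sub>R etv) = my i x" for i x s by (simp add: my_def etv_def)
  have mx2: "mx i (x + s *\<^sub>R etv) = mx i x" for i x s by (simp add: mx_def etv_def)
  have hs_int: "(hs i has_integral 0) HS" for i
  proof -
    have 1: "(hf u (a i) (\<lambda>_. 1) (exv i) \<nu> d has_integral 0) HS"
      unfolding HS_eq by (rule lemmaA[OF ud cu cdu cK KS' u0 ca c1 ai1 refl])
    have 2: "(hf u (a i) (my i) etv \<nu> d has_integral 0) HS"
      unfolding HS_eq by (rule lemmaA[OF ud cu cdu cK KS' u0 ca cmy ai2 my2])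
    have 3: "(hf u (b i) (\<lambda>_. 1) (eyv i) \<nu> d has_integral 0) HS"
      unfolding HS_eq by (rule lemmaA[OF ud cu cdu cK KS' u0 cb c1 bi1 refl])
    have 4: "(hf u (b i) (mx i) etv \<nu> d has_integral 0) HS"
      unfolding HS_eq by (rule lemmaA[OF ud cu cdu cK KS' u0 cb cmx bi2 mx2])
    have "((\<lambda>\<xi>. hf u (a i) (\<lambda>_. 1) (exv i) \<nu> d \<xi> + hf u (a i) (my i) etv \<nu> d \<xi>
      + hf u (b i) (\<lambda>_. 1) (eyv i) \<nu> d \<xi> + hf u (b i) (mx i) etv \<nu> d \<xi>) has_integral (0 + 0 + 0 + 0)) HS"
      by (intro has_integral_add 1 2 3 4)
    then show ?thesis unfolding hs_def by simp
  qed
  have hsum: "((\<lambda>\<xi>. \<Sum>i\<in>UNIV. hs i \<xi>) has_integral 0) HS"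
    using has_integral_sum[of UNIV "\<lambda>i. hs i" "\<lambda>i. 0" HS] hs_int by simp
  define F where "F \<xi> = (\<Sum>i\<in>UNIV. (Xvf i \<xi> \<bullet> \<nu>)\<^sup>2 + (Yvf i \<xi> \<bullet> \<nu>)\<^sup>2)
                 / (infdist \<xi> (frontier (halfspace \<nu> d)))\<^sup>2 * \<bar>u \<xi>\<bar>\<^sup>2" for \<xi>
  have infd: "infdist \<xi> (frontier (halfspace \<nu> d)) = \<xi> \<bullet> \<nu> - d" if "\<xi> \<in> HS" for \<xi>
    using infdist_hs[OF assms(1), of d \<xi>] that unfolding HS_eq halfspace_def by simp
  have Fint: "F integrable_on HS"
  proof (rule intHS[OF oHS cK KHS])
    show "continuous_on HS F" unfolding F_def Xvf_def Yvf_def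
      by (intro continuous_intros) (use infd in \<open>auto simp: HS_eq\<close>)
  qed (auto simp: F_def u0)
  have Gint: "hgrad_sq u integrable_on HS"
  proof (rule intHS[OF oHS cK KHS])
    show "continuous_on HS (hgrad_sq u)" unfolding hgrad_sq_def Xd Yd
      by (intro continuous_intros)
  qed (auto simp: hgrad_sq_def Xder_def Yder_def deriv_zero_out[OF clK u0])
  have pw: "1/4 * F \<xi> + (\<Sum>i\<in>UNIV. hs i \<xi>) \<le> hgrad_sq u \<xi>" if "\<xi> \<in> HS" for \<xi>
  proof -
    define \<delta> where "\<delta> = \<xi> \<bullet> \<nu> - d"
    have dp: "\<delta> > 0" using that unfolding \<delta>_def HS_eq by simp
    have Fe: "1/4 * F \<xi> = (\<Sum>i\<in>UNIV. 1/4 * ((a i \<xi>)\<^sup>2 / \<delta>\<^sup>2 * (u \<xi>)\<^sup>2) + 1/4 * ((b i \<xi>)\<^sup>2 / \<delta>\<^sup>2 * (u \<xi>)\<^sup>2))"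
      unfolding F_def infd[OF that] \<delta>_def[symmetric] a_def b_def
      by (simp add: sum_distrib_left sum_divide_distrib sum_distrib_right algebra_simps add_divide_distrib)
    have trm: "1/4 * ((a i \<xi>)\<^sup>2 / \<delta>\<^sup>2 * (u \<xi>)\<^sup>2) + 1/4 * ((b i \<xi>)\<^sup>2 / \<delta>\<^sup>2 * (u \<xi>)\<^sup>2) + hs i \<xi>
        \<le> (Xder i u \<xi>)\<^sup>2 + (Yder i u \<xi>)\<^sup>2" for i
    proof -
      have hx: "hf u (a i) (\<lambda>_. 1) (exv i) \<nu> d \<xi> + hf u (a i) (my i) etv \<nu> d \<xi> =
        1 * (u \<xi> * frechet_derivative u (at \<xi>) (exv i) * a i \<xi> / \<delta> - (u \<xi>)\<^sup>2 * a i \<xi> * (exv i \<bullet> \<nu>) / (2 * \<delta>\<^sup>2))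
        + my i \<xi> * (u \<xi> * frechet_derivative u (at \<xi>) etv * a i \<xi> / \<delta> - (u \<xi>)\<^sup>2 * a i \<xi> * (etv \<bullet> \<nu>) / (2 * \<delta>\<^sup>2))"
        using dp unfolding hf_def \<delta>_def by simp
      have hy: "hf u (b i) (\<lambda>_. 1) (eyv i) \<nu> d \<xi> + hf u (b i) (mx i) etv \<nu> d \<xi> =
        1 * (u \<xi> * frechet_derivative u (at \<xi>) (eyv i) * b i \<xi> / \<delta> - (u \<xi>)\<^sup>2 * b i \<xi> * (eyv i \<bullet> \<nu>) / (2 * \<delta>\<^sup>2))
        + mx i \<xi> * (u \<xi> * frechet_derivative u (at \<xi>) etv * b i \<xi> / \<delta> - (u \<xi>)\<^sup>2 * b i \<xi> * (etv \<bullet> \<nu>) / (2 * \<delta>\<^sup>2))"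
        using dp unfolding hf_def \<delta>_def by simp
      have ix: "(Xder i u \<xi>)\<^sup>2 \<ge> 1/4 * ((a i \<xi>)\<^sup>2 / \<delta>\<^sup>2 * (u \<xi>)\<^sup>2) +
        (1 * (u \<xi> * frechet_derivative u (at \<xi>) (exv i) * a i \<xi> / \<delta> - (u \<xi>)\<^sup>2 * a i \<xi> * (exv i \<bullet> \<nu>) / (2 * \<delta>\<^sup>2))
        + my i \<xi> * (u \<xi> * frechet_derivative u (at \<xi>) etv * a i \<xi> / \<delta> - (u \<xi>)\<^sup>2 * a i \<xi> * (etv \<bullet> \<nu>) / (2 * \<delta>\<^sup>2)))"
        unfolding Xd my_def[symmetric] by (rule alg2[OF dp]) (simp add: a_def Xa my_def)
      have iy: "(Yder i u \<xi>)\<^sup>2 \<ge> 1/4 * ((b i \<xi>)\<^sup>2 / \<delta>\<^sup>2 * (u \<xi>)\<^sup>2) +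
        (1 * (u \<xi> * frechet_derivative u (at \<xi>) (eyv i) * b i \<xi> / \<delta> - (u \<xi>)\<^sup>2 * b i \<xi> * (eyv i \<bullet> \<nu>) / (2 * \<delta>\<^sup>2))
        + mx i \<xi> * (u \<xi> * frechet_derivative u (at \<xi>) etv * b i \<xi> / \<delta> - (u \<xi>)\<^sup>2 * b i \<xi> * (etv \<bullet> \<nu>) / (2 * \<delta>\<^sup>2)))"
        unfolding Yd mx_def[symmetric] by (rule alg2[OF dp]) (simp add: b_def Ya mx_def)
      show ?thesis using ix iy hx hy unfolding hs_def by linarith
    qed
    have "1/4 * F \<xi> + (\<Sum>i\<in>UNIV. hs i \<xi>) = (\<Sum>i\<in>UNIV. 1/4 * ((a i \<xi>)\<^sup>2 / \<delta>\<^sup>2 * (u \<xi>)\<^sup>2) + 1/4 * ((b i \<xi>)\<^sup>2 / \<delta>\<^sup>2 * (u \<xi>)\<^sup>2) + hs i \<xi>)"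
      unfolding Fe by (simp add: sum.distrib)
    also have "\<dots> \<le> (\<Sum>i\<in>UNIV. (Xder i u \<xi>)\<^sup>2 + (Yder i u \<xi>)\<^sup>2)"
      by (rule sum_mono) (rule trm)
    also have "\<dots> = hgrad_sq u \<xi>" by (simp add: hgrad_sq_def)
    finally show ?thesis .
  qed
  have L: "((\<lambda>\<xi>. 1/4 * F \<xi> + (\<Sum>i\<in>UNIV. hs i \<xi>)) has_integral (1/4 * integral HS F + 0)) HS"
    by (intro has_integral_add has_integral_mult_right integrable_integral Fint hsum)
  have R: "(hgrad_sq u has_integral integral HS (hgrad_sq u)) HS"
    using Gint by (rule integrable_integral)
  have "1/4 * integral HS F + 0 \<le> integral HS (hgrad_sq u)"
    by (rule has_integral_le[OF L R]) (use pw in auto)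
  then show ?thesis unfolding HS_def F_def by simp
qed


end
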